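(* Let $X$ be a regular ultrametric space with Borel measure $\nu$ and ultrametric wavelets $\{\Psi_{Ij}\}$, and let $T$ be an ultrametric pseudodifferential operator on $X$ whose eigenvalue on the wavelets $\Psi_{Ij}$ is $\lambda_I$. Let $f\in D'_0(X)$, write $f_{Ij}=f(\overline{\Psi_{Ij}})$, let $I_0\subset X$ be a ball with $\nu(I_0)>0$ and $u_0\in\mathbb C$. Consider the Cauchy problem: find $u\in D'(X)$ with $Tu=f$ in $D'_0(X)$ and $u(\chi_{I_0})=u_0\nu(I_0)$. Suppose that $f_{Ij}=0$ for all $j$ whenever $\lambda_I=0$. Then a solution of this Cauchy problem exists, and every solution is given by $$u=u_0+\sum_{I:\lambda_I\neq0}\sum_j\frac{1}{\lambda_I}f_{Ij}\left(\Psi_{Ij}-\frac{1}{\nu(I_0)}\Psi_{Ij}(\chi_{I_0})\right)+\sum_{J:\lambda_J=0}\sum_j u_{Jj}\left(\Psi_{Jj}-\frac{1}{\nu(I_0)}\Psi_{Jj}(\chi_{I_0})\right),$$ where the $u_{Jj}$ ($\lambda_J=0$) are arbitrary complex numbers and $\Psi_{Ij}(\chi_{I_0})=\int_X\Psi_{Ij}\chi_{I_0}\,d\nu$.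
   Context: An ultrametric space $X$ is regular if: (1) the set of balls of nonzero diameter is finite or countable; (2) for every decreasing sequence of balls the diameters tend to zero; (3) every ball of nonzero diameter is a finite union of maximal subballs. $\nu$ is a $\sigma$-additive Borel measure on $X$. For a ball $I$ of nonzero diameter, $V^0(I)$ is the space of linear combinations of characteristic functions of the maximal subballs of $I$ having zero $\nu$-mean, and $\{\Psi_{Ij}\}_j$ is a fixed orthonormal basis of $V^0(I)$ in $L^2(X,\nu)$; the ultrametric wavelets are all such $\Psi_{Ij}$, $I$ running over balls of nonzero diameter. $\chi_I$ is the characteristic function of $I$. For $x,y\in X$, $\sup(x,y)$ is the smallest ball containing $x$ and $y$. An ultrametric pseudodifferential operator is $Tf(x)=\int_X T(\sup(x,y))(f(x)-f(y))\,d\nu(y)$ with $T(\cdot)$ a complex function on balls, such that each wavelet is an eigenfunction, $T\Psi_{Ij}=\lambda_I\Psi_{Ij}$, with eigenvalue depending only on $I$. $D(X)$ is the space of locally constant compactly supported complex functions (test functions) with the topology in which a sequence converges iff it lies in a finite-dimensional span of characteristic functions of finitely many balls (from a finite regular subtree of balls) and converges there; $D'(X)$ is its space of linear functionals. $D_0(X)\subset D(X)$ is the space of mean-zero test functions (finite linear combinations of wavelets), and the Lizorkin space $D'_0(X)$ is the space of linear functionals on $D_0(X)$. For $u\in D'(X)$, $Tu\in D'_0(X)$ is defined by $(Tu)(\overline{\Psi_{Ij}})=\lambda_I\,u(\overline{\Psi_{Ij}})$. Series of functions are understood as limits of partial sums along the filtration by finite regular subtrees, acting on test functions by integration against $\nu$;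 the constant $u_0$ acts by $\varphi\mapsto u_0\int\varphi\,d\nu$.
   Formalization: The Borel measure $\nu$ is also assumed to give every ball of positive radius (every open ball) positive and finite measure. The statement above fails without it. *)

theory Defs
  imports "HOL-Analysis.Analysis"
begin

text \<open>The space X is the whole type 'a with its metric dist.\<close>

definition ultrametric :: "'a::metric_space itself \<Rightarrow> bool" where
  "ultrametric _ \<longleftrightarrow> (\<forall>x y z::'a. dist x z \<le> max (dist x y) (dist y z))"

text \<open>Balls are closed balls (radius 0 allowed; then the ball is a point).\<close>
definition is_ball :: "'a::metric_space set \<Rightarrow> bool" where
  "is_ball B \<longleftrightarrow> (\<exists>x r. 0 \<le> r \<and> B = cball x r)"

definition maxsub :: "'a::metric_space set \<Rightarrow> 'a set set" where
  "maxsub I = {B. is_ball B \<and> B \<subset> I \<and> \<not> (\<exists>B'. is_ball B' \<and> B \<subset> B' \<and> B' \<subset> I)}"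

definition nz_balls :: "'a::metric_space set set" where
  "nz_balls = {I. is_ball I \<and> diameter I \<noteq> 0}"

definition regular_ultrametric :: "'a::metric_space itself \<Rightarrow> bool" where
  "regular_ultrametric T \<longleftrightarrow> ultrametric T
     \<and> countable (nz_balls :: 'a set set)
     \<and> (\<forall>Bs :: nat \<Rightarrow> 'a set. (\<forall>n. is_ball (Bs n)) \<and> (\<forall>n. Bs (Suc n) \<subset> Bs n)
            \<longrightarrow> (\<lambda>n. diameter (Bs n)) \<longlonglongrightarrow> 0)
     \<and> (\<forall>I::'a set. I \<in> nz_balls \<longrightarrow> (\<exists>F. finite F \<and> F \<subseteq> maxsub I \<and> \<Union>F = I))"

definition ball_sup :: "'a::metric_space \<Rightarrow> 'a \<Rightarrow> 'a set" where
  "ball_sup x y = (THE B. is_ball B \<and> x \<in> B \<and> y \<in> B \<and>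
      (\<forall>B'. is_ball B' \<and> x \<in> B' \<and> y \<in> B' \<longrightarrow> B \<subseteq> B'))"

text \<open>A sigma-additive Borel measure; balls of positive radius (= open balls,
  i.e. those whose characteristic function is locally constant) have positive
  finite measure.\<close>
definition ball_measure :: "'a::metric_space measure \<Rightarrow> bool" where
  "ball_measure M \<longleftrightarrow> sets M = sets borel \<and>
     (\<forall>B. is_ball B \<and> open B \<longrightarrow> 0 < emeasure M B \<and> emeasure M B < \<infinity>)"

definition V0 :: "'a::metric_space measure \<Rightarrow> 'a set \<Rightarrow> ('a \<Rightarrow> complex) set" where
  "V0 M I = {g. (\<exists>c. g = (\<lambda>x. \<Sum>B\<in>maxsub I. c B * indicator B x)) \<and> (LINT x|M. g x) = 0}"

definition wavelet_basis :: "'a::metric_space measure \<Rightarrow> ('a set \<Rightarrow> nat \<Rightarrow> 'a \<Rightarrow> complex)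
    \<Rightarrow> ('a set \<Rightarrow> nat set) \<Rightarrow> bool" where
  "wavelet_basis M Psi idx \<longleftrightarrow> (\<forall>I\<in>nz_balls.
      finite (idx I)
    \<and> (\<forall>j\<in>idx I. Psi I j \<in> V0 M I)
    \<and> (\<forall>j\<in>idx I. \<forall>k\<in>idx I. (LINT x|M. Psi I j x * cnj (Psi I k x)) = (if j = k then 1 else 0))
    \<and> (\<forall>g\<in>V0 M I. \<exists>a. AE x in M. g x = (\<Sum>j\<in>idx I. a j * Psi I j x)))"

definition ultrametric_pdo :: "'a::metric_space measure \<Rightarrow> ('a set \<Rightarrow> complex)
    \<Rightarrow> ('a set \<Rightarrow> complex) \<Rightarrow> ('a set \<Rightarrow> nat \<Rightarrow> 'a \<Rightarrow> complex) \<Rightarrow> ('a set \<Rightarrow> nat set) \<Rightarrow> bool" where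
  "ultrametric_pdo M Tk lam Psi idx \<longleftrightarrow> (\<forall>I\<in>nz_balls. \<forall>j\<in>idx I.
      AE x in M. integrable M (\<lambda>y. Tk (ball_sup x y) * (Psi I j x - Psi I j y))
        \<and> (LINT y|M. Tk (ball_sup x y) * (Psi I j x - Psi I j y)) = lam I * Psi I j x)"

definition test_fun :: "('a::metric_space \<Rightarrow> complex) set" where
  "test_fun = {\<phi>. \<exists>F c. finite F \<and> (\<forall>B\<in>F. is_ball B \<and> open B)
                     \<and> \<phi> = (\<lambda>x. \<Sum>B\<in>F. c B * indicator B x)}"

definition test_fun0 :: "'a::metric_space measure \<Rightarrow> ('a \<Rightarrow> complex) set" where
  "test_fun0 M = {\<phi>\<in>test_fun. (LINT x|M. \<phi> x) = 0}"

text \<open>Linear functionals on a space S of functions (all are continuous for the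
  inductive-limit topology of finite-dimensional subspaces).\<close>
definition lin_fun :: "('a \<Rightarrow> complex) set \<Rightarrow> (('a \<Rightarrow> complex) \<Rightarrow> complex) \<Rightarrow> bool" where
  "lin_fun S u \<longleftrightarrow> (\<forall>\<phi>\<in>S. \<forall>\<psi>\<in>S. u (\<lambda>x. \<phi> x + \<psi> x) = u \<phi> + u \<psi>)
                  \<and> (\<forall>\<phi>\<in>S. \<forall>a. u (\<lambda>x. a * \<phi> x) = a * u \<phi>)"

text \<open>Tu = f in D'_0(X), where Tu in D'_0(X) is defined on the basis of conjugated
  wavelets of D_0(X) by (Tu)(conj Psi_Ij) = lam I * u(conj Psi_Ij).\<close>
definition pdo_eq :: "('a::metric_space set \<Rightarrow> complex) \<Rightarrow> ('a set \<Rightarrow> nat \<Rightarrow> 'a \<Rightarrow> complex)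
    \<Rightarrow> ('a set \<Rightarrow> nat set) \<Rightarrow> (('a \<Rightarrow> complex) \<Rightarrow> complex) \<Rightarrow> (('a \<Rightarrow> complex) \<Rightarrow> complex) \<Rightarrow> bool" where
  "pdo_eq lam Psi idx u f \<longleftrightarrow> (\<forall>I\<in>nz_balls. \<forall>j\<in>idx I.
      lam I * u (\<lambda>x. cnj (Psi I j x)) = f (\<lambda>x. cnj (Psi I j x)))"

definition cauchy_solution :: "'a::metric_space measure \<Rightarrow> ('a set \<Rightarrow> complex)
    \<Rightarrow> ('a set \<Rightarrow> nat \<Rightarrow> 'a \<Rightarrow> complex) \<Rightarrow> ('a set \<Rightarrow> nat set) \<Rightarrow> (('a \<Rightarrow> complex) \<Rightarrow> complex)
    \<Rightarrow> 'a set \<Rightarrow> complex \<Rightarrow> (('a \<Rightarrow> complex) \<Rightarrow> complex) \<Rightarrow> bool" where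
  "cauchy_solution M lam Psi idx f I0 u0 u \<longleftrightarrow>
     lin_fun test_fun u \<and> pdo_eq lam Psi idx u f
     \<and> u (indicator I0) = u0 * complex_of_real (measure M I0)"

text \<open>The distribution Psi_Ij - (1/nu(I0)) Psi_Ij(chi_I0), acting on a test function
  phi by integration against nu.\<close>
definition wave_term :: "'a::metric_space measure \<Rightarrow> 'a set \<Rightarrow> ('a \<Rightarrow> complex)
    \<Rightarrow> ('a \<Rightarrow> complex) \<Rightarrow> complex" where
  "wave_term M I0 \<Psi> \<phi> = (LINT x|M. \<Psi> x * \<phi> x)
     - (LINT x|M. \<Psi> x * indicator I0 x) / complex_of_real (measure M I0) * (LINT x|M. \<phi> x)"

text \<open>u = u0 + sum_{lam_I <> 0} sum_j f_Ij/lam_I (Psi_Ij - ...) + sum_{lam_J = 0} sum_j c_Jj (Psi_Jj - ...),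
  the series acting on each test function and converging (as a sum over the
  countable index set of pairs (I,j)).\<close>
definition solution_formula :: "'a::metric_space measure \<Rightarrow> ('a set \<Rightarrow> complex)
    \<Rightarrow> ('a set \<Rightarrow> nat \<Rightarrow> 'a \<Rightarrow> complex) \<Rightarrow> ('a set \<Rightarrow> nat set) \<Rightarrow> (('a \<Rightarrow> complex) \<Rightarrow> complex)
    \<Rightarrow> 'a set \<Rightarrow> complex \<Rightarrow> ('a set \<Rightarrow> nat \<Rightarrow> complex) \<Rightarrow> (('a \<Rightarrow> complex) \<Rightarrow> complex) \<Rightarrow> bool" where
  "solution_formula M lam Psi idx f I0 u0 c u \<longleftrightarrow> (\<forall>\<phi>\<in>test_fun.
     ((\<lambda>(I, j). (if lam I \<noteq> 0 then f (\<lambda>x. cnj (Psi I j x)) / lam I else c I j)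
                 * wave_term M I0 (Psi I j) \<phi>)
       has_sum (u \<phi> - u0 * (LINT x|M. \<phi> x))) {(I, j). I \<in> nz_balls \<and> j \<in> idx I})"

end

theory Submission
  imports Defs
begin

lemma ultraD: "ultrametric TYPE('a::metric_space) \<Longrightarrow> dist (x::'a) z \<le> max (dist x y) (dist y z)"
  unfolding ultrametric_def by blast

lemma ultra_cball_open:
  assumes u: "ultrametric TYPE('a::metric_space)" and r: "r > 0"
  shows "open (cball (x::'a) r)"
proof (rule openI)
  fix z assume z: "z \<in> cball x r"
  have "ball z r \<subseteq> cball x r"
  proof
    fix w assume "w \<in> ball z r"
    then have "dist z w < r" by simp
    moreover have "dist x w \<le> max (dist x z) (dist z w)" using ultraD[OF u] by blast
    ultimately show "w \<in> cball x r" using z by auto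
  qed
  then show "\<exists>e>0. ball z e \<subseteq> cball x r" using r by blast
qed

lemma ultra_nested:
  assumes u: "ultrametric TYPE('a::metric_space)" and A: "is_ball (A::'a set)" and B: "is_ball B"
    and ne: "A \<inter> B \<noteq> {}"
  shows "A \<subseteq> B \<or> B \<subseteq> A"
proof -
  obtain x r where A': "A = cball x r" "r \<ge> 0" using A unfolding is_ball_def by blast
  obtain y s where B': "B = cball y s" "s \<ge> 0" using B unfolding is_ball_def by blast
  obtain z where z: "z \<in> A" "z \<in> B" using ne by blast
  have sub: "cball a p \<subseteq> cball b q" if "p \<le> q" "c \<in> cball a p" "c \<in> cball b q" for a b c :: 'a and p q
  proof
    fix w assume w: "w \<in> cball a p"
    have "dist c w \<le> max (dist c a) (dist a w)" using ultraD[OF u] by blast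
    also have "\<dots> \<le> p" using w that by (auto simp: dist_commute)
    finally have "dist c w \<le> q" using that by simp
    moreover have "dist b w \<le> max (dist b c) (dist c w)" using ultraD[OF u] by blast
    ultimately show "w \<in> cball b q" using that by auto
  qed
  show ?thesis
  proof (cases "r \<le> s")
    case True then show ?thesis using sub[of r s z x y] A' B' z by auto
  next
    case False then show ?thesis using sub[of s r z y x] A' B' z by auto
  qed
qed

lemma is_ball_ne: "is_ball B \<Longrightarrow> B \<noteq> {}"
  unfolding is_ball_def by auto

lemma is_ball_closed: "is_ball B \<Longrightarrow> closed B"
  unfolding is_ball_def by auto

lemma is_ball_bounded: "is_ball B \<Longrightarrow> bounded B"
  unfolding is_ball_def by auto

lemma nz_balls_open:
  assumes u: "ultrametric TYPE('a::metric_space)" and I: "(I::'a set) \<in> nz_balls"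
  shows "open I"
proof -
  obtain x r where I': "I = cball x r" "r \<ge> 0" using I unfolding nz_balls_def is_ball_def by blast
  show ?thesis
  proof (cases "r = 0")
    case True then have "I = {x}" using I' by simp
    then have "diameter I = 0" by simp
    then show ?thesis using I unfolding nz_balls_def by simp
  next
    case False then show ?thesis using ultra_cball_open[OF u] I' by simp
  qed
qed

lemma nz_balls_I: "is_ball I \<Longrightarrow> x \<in> I \<Longrightarrow> y \<in> I \<Longrightarrow> x \<noteq> y \<Longrightarrow> I \<in> nz_balls"
  unfolding nz_balls_def using diameter_bounded_bound[of I x y] is_ball_bounded[of I] by fastforce



locale U =
  fixes M :: "'a::metric_space measure" and Psi :: "'a set \<Rightarrow> nat \<Rightarrow> 'a \<Rightarrow> complex"
    and idx :: "'a set \<Rightarrow> nat set"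
  assumes reg: "regular_ultrametric TYPE('a)" and bm: "ball_measure M" and wb: "wavelet_basis M Psi idx"
begin

lemma u: "ultrametric TYPE('a)" using reg unfolding regular_ultrametric_def by blast

lemma sets_M: "sets M = sets borel" using bm unfolding ball_measure_def by blast
lemma space_M[simp]: "space M = UNIV" using sets_eq_imp_space_eq[OF sets_M] by simp

lemma ball_sets: "is_ball B \<Longrightarrow> B \<in> sets M"
  by (metis sets_M borel_closed is_ball_closed)

lemma ob_emeas: "is_ball B \<Longrightarrow> open B \<Longrightarrow> 0 < emeasure M B \<and> emeasure M B < \<infinity>"
  using bm unfolding ball_measure_def by blast

lemma ob_meas: "is_ball B \<Longrightarrow> open B \<Longrightarrow> 0 < measure M B"
  using ob_emeas[of B] by (simp add: measure_def enn2real_positive_iff)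

lemma int_ind: "A \<in> sets M \<Longrightarrow> emeasure M A < \<infinity> \<Longrightarrow> integrable M (\<lambda>x. indicator A x :: complex)"
proof -
  assume a: "A \<in> sets M" "emeasure M A < \<infinity>"
  then have "integrable M (indicator A :: _ \<Rightarrow> real)" by (simp add: integrable_indicator_iff)
  then have "integrable M (\<lambda>x. complex_of_real (indicator A x))" by simp
  then show ?thesis by (simp add: of_real_indicator)
qed

lemma lint_ind: "(LINT x|M. indicator A x :: complex) = complex_of_real (measure M A)"
proof -
  have "(LINT x|M. indicator A x :: complex) = (LINT x|M. complex_of_real (indicator A x))"
    by (simp add: of_real_indicator)
  also have "\<dots> = complex_of_real (measure M A)" by simp
  finally show ?thesis .
qed

lemma ms_cover: "(I::'a set) \<in> nz_balls \<Longrightarrow> \<exists>F. finite F \<and> F \<subseteq> maxsub I \<and> \<Union>F = I"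
  using reg unfolding regular_ultrametric_def by blast

lemma ms_sub: "(B::'a set) \<in> maxsub I \<Longrightarrow> is_ball B \<and> B \<subset> I"
  unfolding maxsub_def by blast

lemma ms_max: "(B::'a set) \<in> maxsub I \<Longrightarrow> is_ball B' \<Longrightarrow> B \<subseteq> B' \<Longrightarrow> B' \<subset> I \<Longrightarrow> B' = B"
  unfolding maxsub_def by blast

lemma ms_disj: assumes "(B1::'a set) \<in> maxsub I" "B2 \<in> maxsub I" "B1 \<inter> B2 \<noteq> {}" shows "B1 = B2"
proof -
  have b: "is_ball B1" "is_ball B2" using assms(1,2) ms_sub by auto
  have "B1 \<subseteq> B2 \<or> B2 \<subseteq> B1" using ultra_nested[OF u b assms(3)] .
  moreover have "B2 \<subset> I" "B1 \<subset> I" using assms(1,2) ms_sub by auto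
  ultimately show ?thesis using ms_max[OF assms(1) b(2)] ms_max[OF assms(2) b(1)] by blast
qed

lemma ms_eqF:
  assumes I: "(I::'a set) \<in> nz_balls" and F: "F \<subseteq> maxsub I" "\<Union>F = I"
  shows "maxsub I = F"
proof
  show "maxsub I \<subseteq> F"
  proof
    fix B assume B: "B \<in> maxsub I"
    then obtain x where x: "x \<in> B" using ms_sub is_ball_ne by blast
    then have "x \<in> I" using B ms_sub by blast
    then obtain B' where "B' \<in> F" "x \<in> B'" using F by blast
    then show "B \<in> F" using ms_disj[of B I B'] B F x by blast
  qed
qed (use F in blast)

lemma ms_finite: "(I::'a set) \<in> nz_balls \<Longrightarrow> finite (maxsub I)"
  using ms_cover ms_eqF by metis

lemma ms_union: "(I::'a set) \<in> nz_balls \<Longrightarrow> \<Union>(maxsub I) = I"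
  using ms_cover ms_eqF by metis

lemma ms_contains:
  assumes I: "(I::'a set) \<in> nz_balls" and B: "is_ball B" "B \<subset> I"
  shows "\<exists>B'\<in>maxsub I. B \<subseteq> B'"
proof -
  obtain x where x: "x \<in> B" using B is_ball_ne by blast
  then obtain B' where B': "B' \<in> maxsub I" "x \<in> B'" using ms_union[OF I] B by blast
  then have "B \<subseteq> B' \<or> B' \<subseteq> B" using ultra_nested[OF u, of B B'] B x ms_sub by blast
  then show ?thesis using B' ms_max[of B' I B] B by blast
qed

lemma ms_open: assumes I: "(I::'a set) \<in> nz_balls" and B: "B \<in> maxsub I" shows "open B"
proof -
  obtain x r where B': "B = cball x r" "r \<ge> 0" using B ms_sub unfolding is_ball_def by blast
  show ?thesis
  proof (cases "r = 0")
    case False then have "r > 0" using B' by simp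
    then show ?thesis using ultra_cball_open[OF u] B' by simp
  next
    case True
    have "B = I - \<Union>(maxsub I - {B})"
    proof
      show "B \<subseteq> I - \<Union>(maxsub I - {B})" using ms_disj[OF B] B ms_sub by blast
      show "I - \<Union>(maxsub I - {B}) \<subseteq> B" using ms_union[OF I] by blast
    qed
    moreover have "closed (\<Union>(maxsub I - {B}))"
      using ms_finite[OF I] ms_sub is_ball_closed by (intro closed_Union) auto
    ultimately show ?thesis using nz_balls_open[OF u I] by (metis open_Diff)
  qed
qed

lemma ind_sum: assumes I: "(I::'a set) \<in> nz_balls"
  shows "indicator I x = (\<Sum>B\<in>maxsub I. indicator B x :: complex)"
proof (cases "x \<in> I")
  case False
  then have "\<forall>B\<in>maxsub I. x \<notin> B" using ms_sub by blast
  then show ?thesis using False by simp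
next
  case True
  then obtain B0 where B0: "B0 \<in> maxsub I" "x \<in> B0" using ms_union[OF I] by blast
  have "(\<Sum>B\<in>maxsub I. indicator B x :: complex) = indicator B0 x + (\<Sum>B\<in>maxsub I - {B0}. indicator B x)"
    by (rule sum.remove[OF ms_finite[OF I] B0(1)])
  also have "(\<Sum>B\<in>maxsub I - {B0}. indicator B x :: complex) = 0"
  proof (intro sum.neutral ballI)
    fix B' assume B': "B' \<in> maxsub I - {B0}"
    then have "x \<notin> B'" using ms_disj[OF B0(1), of B'] B0 by blast
    then show "indicator B' x = (0::complex)" by simp
  qed
  finally show ?thesis using B0 True by simp
qed

lemma comb_val: assumes I: "(I::'a set) \<in> nz_balls" and B: "B \<in> maxsub I" and x: "x \<in> B"
  shows "(\<Sum>B'\<in>maxsub I. c B' * indicator B' x :: complex) = c B"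
proof -
  have "(\<Sum>B'\<in>maxsub I. c B' * indicator B' x :: complex) = c B * indicator B x + (\<Sum>B'\<in>maxsub I - {B}. c B' * indicator B' x)"
    by (rule sum.remove[OF ms_finite[OF I] B])
  also have "(\<Sum>B'\<in>maxsub I - {B}. c B' * indicator B' x :: complex) = 0"
  proof (intro sum.neutral ballI)
    fix B' assume B': "B' \<in> maxsub I - {B}"
    then have "x \<notin> B'" using ms_disj[OF B, of B'] x by blast
    then show "c B' * indicator B' x = 0" by simp
  qed
  finally show ?thesis using x by simp
qed

lemma comb_out: assumes "x \<notin> (I::'a set)"
  shows "(\<Sum>B'\<in>maxsub I. c B' * indicator B' x :: complex) = 0"
proof (intro sum.neutral ballI)
  fix B assume "B \<in> maxsub I"
  then have "x \<notin> B" using assms ms_sub by blast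
  then show "c B * indicator B x = 0" by simp
qed

end


lemma sum_ext_zero:
  assumes "finite H" "F \<subseteq> H"
  shows "(\<Sum>B\<in>H. (if B \<in> F then c B else 0) * g B) = (\<Sum>B\<in>F. c B * g B :: 'b::comm_ring_1)"
proof -
  have "(\<Sum>B\<in>H. (if B \<in> F then c B else 0) * g B) = (\<Sum>B\<in>H. if B \<in> F then c B * g B else 0)"
    by (intro sum.cong) auto
  also have "\<dots> = (\<Sum>B\<in>H \<inter> F. c B * g B)" using assms(1) by (simp add: sum.inter_restrict)
  also have "H \<inter> F = F" using assms(2) by blast
  finally show ?thesis .
qed

lemma tf_ind: "is_ball B \<Longrightarrow> open B \<Longrightarrow> indicator B \<in> test_fun"
  unfolding test_fun_def by (rule CollectI, rule exI[of _ "{B}"], rule exI[of _ "\<lambda>_. 1"]) auto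

lemma tfI: assumes "finite F" "\<forall>B\<in>F. is_ball B \<and> open B" "\<phi> = (\<lambda>x. \<Sum>B\<in>F. c B * indicator B x)"
  shows "\<phi> \<in> test_fun"
  unfolding test_fun_def using assms by blast

lemma tf_add: assumes "\<phi> \<in> test_fun" "\<psi> \<in> test_fun" shows "(\<lambda>x. \<phi> x + \<psi> x) \<in> test_fun"
proof -
  obtain F c where F: "finite F" "\<forall>B\<in>F. is_ball B \<and> open B" "\<phi> = (\<lambda>x. \<Sum>B\<in>F. c B * indicator B x)"
    using assms(1) unfolding test_fun_def by blast
  obtain G d where G: "finite G" "\<forall>B\<in>G. is_ball B \<and> open B" "\<psi> = (\<lambda>x. \<Sum>B\<in>G. d B * indicator B x)"
    using assms(2) unfolding test_fun_def by blast
  let ?e = "\<lambda>B. (if B \<in> F then c B else 0) + (if B \<in> G then d B else 0)"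
  have eq: "(\<lambda>x. \<phi> x + \<psi> x) = (\<lambda>x. \<Sum>B\<in>F \<union> G. ?e B * indicator B x)"
  proof
    fix x
    have "(\<Sum>B\<in>F \<union> G. ?e B * indicator B x) =
      (\<Sum>B\<in>F \<union> G. (if B \<in> F then c B else 0) * indicator B x) + (\<Sum>B\<in>F \<union> G. (if B \<in> G then d B else 0) * indicator B x)"
      by (simp add: distrib_right sum.distrib)
    also have "\<dots> = \<phi> x + \<psi> x"
      using F G by (simp add: sum_ext_zero del: sum_mult_indicator)
    finally show "\<phi> x + \<psi> x = (\<Sum>B\<in>F \<union> G. ?e B * indicator B x)" by simp
  qed
  show ?thesis by (rule tfI[OF _ _ eq]) (use F G in auto)
qed

lemma tf_scale: assumes "\<phi> \<in> test_fun" shows "(\<lambda>x. a * \<phi> x) \<in> test_fun"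
proof -
  obtain F c where F: "finite F" "\<forall>B\<in>F. is_ball B \<and> open B" "\<phi> = (\<lambda>x. \<Sum>B\<in>F. c B * indicator B x)"
    using assms(1) unfolding test_fun_def by blast
  have eq: "(\<lambda>x. a * \<phi> x) = (\<lambda>x. \<Sum>B\<in>F. (a * c B) * indicator B x)"
    using F by (simp add: sum_distrib_left mult.assoc del: sum_mult_indicator)
  show ?thesis by (rule tfI[OF F(1,2) eq])
qed

lemma tf_cnj: assumes "\<phi> \<in> test_fun" shows "(\<lambda>x. cnj (\<phi> x)) \<in> test_fun"
proof -
  obtain F c where F: "finite F" "\<forall>B\<in>F. is_ball B \<and> open B" "\<phi> = (\<lambda>x. \<Sum>B\<in>F. c B * indicator B x)"
    using assms(1) unfolding test_fun_def by blast
  have eq: "(\<lambda>x. cnj (\<phi> x)) = (\<lambda>x. \<Sum>B\<in>F. cnj (c B) * indicator B x)"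
    using F by (simp add: indicator_def)
  show ?thesis by (rule tfI[OF F(1,2) eq])
qed

context U begin

lemma tf_int: assumes "\<phi> \<in> test_fun" shows "integrable M \<phi>"
proof -
  obtain F c where F: "finite F" "\<forall>B\<in>F. is_ball B \<and> open B" "\<phi> = (\<lambda>x. \<Sum>B\<in>F. c B * indicator B x)"
    using assms(1) unfolding test_fun_def by blast
  have "integrable M (\<lambda>x. \<Sum>B\<in>F. c B * indicator B x)"
  proof (intro Bochner_Integration.integrable_sum integrable_mult_right int_ind)
    fix B assume "B \<in> F"
    then show "B \<in> sets M" "emeasure M B < \<infinity>" using F ball_sets ob_emeas by auto
  qed
  then show ?thesis using F by simp
qed

lemma tf_mult_int: assumes "\<phi> \<in> test_fun" "\<psi> \<in> test_fun" shows "integrable M (\<lambda>x. \<phi> x * \<psi> x)"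
proof -
  obtain F c where F: "finite F" "\<forall>B\<in>F. is_ball B \<and> open B" "\<phi> = (\<lambda>x. \<Sum>B\<in>F. c B * indicator B x)"
    using assms(1) unfolding test_fun_def by blast
  obtain G d where G: "finite G" "\<forall>B\<in>G. is_ball B \<and> open B" "\<psi> = (\<lambda>x. \<Sum>B\<in>G. d B * indicator B x)"
    using assms(2) unfolding test_fun_def by blast
  have e: "\<phi> x * \<psi> x = (\<Sum>A\<in>F. \<Sum>B\<in>G. (c A * d B) * indicator (A \<inter> B) x)" for x
    using F G by (simp add: sum_product indicator_inter_arith mult_ac del: sum_mult_indicator)
  have "integrable M (\<lambda>x. \<Sum>A\<in>F. \<Sum>B\<in>G. (c A * d B) * indicator (A \<inter> B) x)"
  proof (intro Bochner_Integration.integrable_sum integrable_mult_right int_ind)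
    fix A B assume "A \<in> F" "B \<in> G"
    then show "A \<inter> B \<in> sets M" using F G ball_sets by auto
    have "emeasure M (A \<inter> B) \<le> emeasure M A" using \<open>A \<in> F\<close> F ball_sets by (intro emeasure_mono) auto
    then show "emeasure M (A \<inter> B) < \<infinity>" using ob_emeas[of A] \<open>A \<in> F\<close> F by (meson le_less_trans)
  qed
  then show ?thesis using e by simp
qed

lemma psi_form: assumes "I \<in> nz_balls" "j \<in> idx I"
  shows "\<exists>c. Psi I j = (\<lambda>x. \<Sum>B\<in>maxsub I. c B * indicator B x) \<and> (LINT x|M. Psi I j x) = 0"
proof -
  have "Psi I j \<in> V0 M I" using wb assms unfolding wavelet_basis_def by blast
  then show ?thesis unfolding V0_def by blast
qed

lemma comb_tf: assumes "(I::'a set) \<in> nz_balls" shows "(\<lambda>x. \<Sum>B\<in>maxsub I. c B * indicator B x) \<in> test_fun"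
  unfolding test_fun_def using ms_finite[OF assms] ms_sub ms_open[OF assms] by blast

lemma psi_tf: assumes "I \<in> nz_balls" "j \<in> idx I" shows "Psi I j \<in> test_fun"
proof -
  obtain c where c: "Psi I j = (\<lambda>x. \<Sum>B\<in>maxsub I. c B * indicator B x)" using psi_form[OF assms] by blast
  show ?thesis unfolding c by (rule comb_tf[OF assms(1)])
qed

lemma psi_out: assumes "I \<in> nz_balls" "j \<in> idx I" "x \<notin> I" shows "Psi I j x = 0"
proof -
  obtain c where c: "Psi I j = (\<lambda>x. \<Sum>B\<in>maxsub I. c B * indicator B x)" using psi_form[OF assms(1,2)] by blast
  show ?thesis unfolding c by (rule comb_out[OF assms(3)])
qed

lemma psi_const: assumes "I \<in> nz_balls" "j \<in> idx I" "is_ball J" "J \<subset> I"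
  shows "\<exists>k. \<forall>x\<in>J. Psi I j x = k"
proof -
  obtain c where c: "Psi I j = (\<lambda>x. \<Sum>B\<in>maxsub I. c B * indicator B x)" using psi_form[OF assms(1,2)] by blast
  obtain B where B: "B \<in> maxsub I" "J \<subseteq> B" using ms_contains[OF assms(1,3,4)] by blast
  have "\<forall>x\<in>J. Psi I j x = c B" using comb_val[OF assms(1) B(1)] B(2) c by auto
  then show ?thesis by blast
qed

lemma psi_orth:
  assumes I: "I \<in> nz_balls" "j \<in> idx I" and I': "I' \<in> nz_balls" "j' \<in> idx I'"
  shows "(LINT x|M. Psi I j x * cnj (Psi I' j' x)) = (if I = I' \<and> j = j' then 1 else 0)"
proof (cases "I = I'")
  case True
  have "\<forall>j\<in>idx I. \<forall>k\<in>idx I. (LINT x|M. Psi I j x * cnj (Psi I k x)) = (if j = k then 1 else 0)"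
    using bspec[OF wb[unfolded wavelet_basis_def] I(1)] by (elim conjE)
  then have "(LINT x|M. Psi I j x * cnj (Psi I j' x)) = (if j = j' then 1 else 0)"
    using I(2) I'(2) True by blast
  then show ?thesis using True by simp
next
  case False
  have bI: "is_ball I" "is_ball I'" using I I' unfolding nz_balls_def by auto
  show ?thesis
  proof (cases "I \<inter> I' = {}")
    case True
    have e: "(\<lambda>x. Psi I j x * cnj (Psi I' j' x)) = (\<lambda>x. 0)"
    proof
      fix x show "Psi I j x * cnj (Psi I' j' x) = 0"
      proof (cases "x \<in> I")
        case True2: True
        then have "x \<notin> I'" using True by blast
        then show ?thesis using psi_out[OF I', of x] by simp
      next
        case False
        then show ?thesis using psi_out[OF I, of x] by simp
      qed
    qed
    have "(LINT x|M. Psi I j x * cnj (Psi I' j' x)) = (LINT x|M. 0)" by (simp only: e)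
    then show ?thesis using False by simp
  next
    case ne: False
    have "I \<subset> I' \<or> I' \<subset> I" using ultra_nested[OF u bI ne] False by blast
    then show ?thesis
    proof
      assume sub: "I' \<subset> I"
      obtain k where k: "\<forall>x\<in>I'. Psi I j x = k" using psi_const[OF I bI(2) sub] by blast
      have e: "(\<lambda>x. Psi I j x * cnj (Psi I' j' x)) = (\<lambda>x. k * cnj (Psi I' j' x))"
      proof
        fix x show "Psi I j x * cnj (Psi I' j' x) = k * cnj (Psi I' j' x)"
          using k psi_out[OF I', of x] by (cases "x \<in> I'") auto
      qed
      have "(LINT x|M. Psi I j x * cnj (Psi I' j' x)) = (LINT x|M. k * cnj (Psi I' j' x))" by (simp only: e)
      also have "\<dots> = k * cnj (LINT x|M. Psi I' j' x)" by simp
      also have "\<dots> = 0" using psi_form[OF I'] by simp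
      finally show ?thesis using False by simp
    next
      assume sub: "I \<subset> I'"
      obtain k where k: "\<forall>x\<in>I. Psi I' j' x = k" using psi_const[OF I' bI(1) sub] by blast
      have e: "(\<lambda>x. Psi I j x * cnj (Psi I' j' x)) = (\<lambda>x. Psi I j x * cnj k)"
      proof
        fix x show "Psi I j x * cnj (Psi I' j' x) = Psi I j x * cnj k"
          using k psi_out[OF I, of x] by (cases "x \<in> I") auto
      qed
      have "(LINT x|M. Psi I j x * cnj (Psi I' j' x)) = (LINT x|M. Psi I j x * cnj k)" by (simp only: e)
      also have "\<dots> = (LINT x|M. Psi I j x) * cnj k" by simp
      also have "\<dots> = 0" using psi_form[OF I] by simp
      finally show ?thesis using False by simp
    qed
  qed
qed

end


context U begin

definition Idx :: "('a set \<times> nat) set" where "Idx = {(I, j). I \<in> nz_balls \<and> j \<in> idx I}"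

definition inW :: "('a \<Rightarrow> complex) \<Rightarrow> bool" where
  "inW g \<longleftrightarrow> (\<exists>S a. finite S \<and> S \<subseteq> Idx \<and> g = (\<lambda>x. \<Sum>p\<in>S. a p * cnj (Psi (fst p) (snd p) x)))"

lemma inWI: "finite S \<Longrightarrow> S \<subseteq> Idx \<Longrightarrow> g = (\<lambda>x. \<Sum>p\<in>S. a p * cnj (Psi (fst p) (snd p) x)) \<Longrightarrow> inW g"
  unfolding inW_def by blast

lemma inW_zero: "inW (\<lambda>x. 0)"
  by (rule inWI[of "{}"]) auto

lemma inW_add: assumes "inW g" "inW h" shows "inW (\<lambda>x. g x + h x)"
proof -
  obtain S a where S: "finite S" "S \<subseteq> Idx" "g = (\<lambda>x. \<Sum>p\<in>S. a p * cnj (Psi (fst p) (snd p) x))"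
    using assms(1) unfolding inW_def by blast
  obtain T b where T: "finite T" "T \<subseteq> Idx" "h = (\<lambda>x. \<Sum>p\<in>T. b p * cnj (Psi (fst p) (snd p) x))"
    using assms(2) unfolding inW_def by blast
  let ?e = "\<lambda>p. (if p \<in> S then a p else 0) + (if p \<in> T then b p else 0)"
  have eq: "(\<lambda>x. g x + h x) = (\<lambda>x. \<Sum>p\<in>S \<union> T. ?e p * cnj (Psi (fst p) (snd p) x))"
  proof
    fix x
    have "(\<Sum>p\<in>S \<union> T. ?e p * cnj (Psi (fst p) (snd p) x)) =
      (\<Sum>p\<in>S \<union> T. (if p \<in> S then a p else 0) * cnj (Psi (fst p) (snd p) x)) + (\<Sum>p\<in>S \<union> T. (if p \<in> T then b p else 0) * cnj (Psi (fst p) (snd p) x))"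
      by (simp add: distrib_right sum.distrib)
    also have "\<dots> = g x + h x"
      using S T by (simp add: sum_ext_zero)
    finally show "g x + h x = (\<Sum>p\<in>S \<union> T. ?e p * cnj (Psi (fst p) (snd p) x))" by simp
  qed
  show ?thesis by (rule inWI[OF _ _ eq]) (use S T in auto)
qed

lemma inW_scale: assumes "inW g" shows "inW (\<lambda>x. c * g x)"
proof -
  obtain S a where S: "finite S" "S \<subseteq> Idx" "g = (\<lambda>x. \<Sum>p\<in>S. a p * cnj (Psi (fst p) (snd p) x))"
    using assms(1) unfolding inW_def by blast
  have eq: "(\<lambda>x. c * g x) = (\<lambda>x. \<Sum>p\<in>S. (c * a p) * cnj (Psi (fst p) (snd p) x))"
    using S by (simp add: sum_distrib_left mult.assoc)
  show ?thesis by (rule inWI[OF S(1,2) eq])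
qed

lemma inW_sum: assumes "finite F" "\<And>B. B \<in> F \<Longrightarrow> inW (g B)" shows "inW (\<lambda>x. \<Sum>B\<in>F. g B x)"
  using assms
proof (induction F rule: finite_induct)
  case empty then show ?case using inW_zero by simp
next
  case (insert B F)
  have "inW (\<lambda>x. g B x + (\<Sum>B\<in>F. g B x))" using insert by (intro inW_add) auto
  then show ?case using insert by simp
qed

lemma inW_eqI: assumes "inW g" "\<And>x. h x = g x" shows "inW h"
proof -
  have "h = g" using assms(2) by (rule ext)
  then show ?thesis using assms(1) by simp
qed

lemma cnj_ind: "cnj (indicator B x :: complex) = indicator B x"
  by (simp add: indicator_def)

lemma AE_ball_contra:
  assumes ae: "AE x in M. P x" and B: "is_ball B" "open B" and np: "\<forall>x\<in>B. \<not> P x"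
  shows False
proof -
  obtain N where N: "{x \<in> space M. \<not> P x} \<subseteq> N" "emeasure M N = 0" "N \<in> sets M"
    using ae by (auto elim: AE_E)
  have "B \<subseteq> N" using N(1) np by auto
  then have "emeasure M B \<le> emeasure M N" using N(3) by (intro emeasure_mono)
  then show False using N(2) ob_emeas[OF B] by simp
qed

lemma comb_const: assumes "(I::'a set) \<in> nz_balls" "B \<in> maxsub I" "x \<in> B" "y \<in> B"
  shows "(\<Sum>B'\<in>maxsub I. c B' * indicator B' x :: complex) = (\<Sum>B'\<in>maxsub I. c B' * indicator B' y)"
  using comb_val[OF assms(1,2,3)] comb_val[OF assms(1,2,4)] by simp

lemma psi_const2: assumes "I \<in> nz_balls" "j \<in> idx I" "B \<in> maxsub I" "x \<in> B" "y \<in> B"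
  shows "Psi I j x = Psi I j y"
proof -
  obtain c where c: "Psi I j = (\<lambda>x. \<Sum>B\<in>maxsub I. c B * indicator B x)" using psi_form[OF assms(1,2)] by blast
  show ?thesis unfolding c by (rule comb_const[OF assms(1,3,4,5)])
qed

lemma idx_finite: "I \<in> nz_balls \<Longrightarrow> finite (idx I)"
  using bspec[OF wb[unfolded wavelet_basis_def]] by blast

lemma V0_span: assumes I: "I \<in> nz_balls" and g: "g \<in> V0 M I"
  shows "\<exists>a. AE x in M. g x = (\<Sum>j\<in>idx I. a j * Psi I j x)"
proof -
  have "\<forall>g\<in>V0 M I. \<exists>a. AE x in M. g x = (\<Sum>j\<in>idx I. a j * Psi I j x)"
    using bspec[OF wb[unfolded wavelet_basis_def] I] by (elim conjE)
  then show ?thesis using g by blast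
qed

lemma V0_inW: assumes I: "I \<in> nz_balls" and g: "g \<in> V0 M I" shows "inW g"
proof -
  obtain c where c: "g = (\<lambda>x. \<Sum>B\<in>maxsub I. c B * indicator B x)" and int0: "(LINT x|M. g x) = 0"
    using g unfolding V0_def by blast
  have cg: "(\<lambda>x. cnj (g x)) = (\<lambda>x. \<Sum>B\<in>maxsub I. cnj (c B) * indicator B x)"
    unfolding c by (simp add: cnj_ind)
  have "(LINT x|M. cnj (g x)) = 0" using int0 by simp
  then have "(\<lambda>x. cnj (g x)) \<in> V0 M I" unfolding V0_def
    by (intro CollectI conjI exI[of _ "\<lambda>B. cnj (c B)"] cg) simp
  then obtain a where ae: "AE x in M. cnj (g x) = (\<Sum>j\<in>idx I. a j * Psi I j x)"
    using V0_span[OF I] by blast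
  have pw: "cnj (g x) = (\<Sum>j\<in>idx I. a j * Psi I j x)" for x
  proof (cases "x \<in> I")
    case False
    then show ?thesis using psi_out[OF I] unfolding c using comb_out[OF False] by simp
  next
    case True
    then obtain B where B: "B \<in> maxsub I" "x \<in> B" using ms_union[OF I] by blast
    show ?thesis
    proof (rule ccontr)
      assume ne: "cnj (g x) \<noteq> (\<Sum>j\<in>idx I. a j * Psi I j x)"
      have "\<forall>y\<in>B. cnj (g y) \<noteq> (\<Sum>j\<in>idx I. a j * Psi I j y)"
      proof
        fix y assume y: "y \<in> B"
        have "g y = g x" unfolding c by (rule comb_const[OF I B(1) y B(2)])
        moreover have "Psi I j y = Psi I j x" if "j \<in> idx I" for j using psi_const2[OF I that B(1) y B(2)] .
        ultimately show "cnj (g y) \<noteq> (\<Sum>j\<in>idx I. a j * Psi I j y)" using ne by simp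
      qed
      then show False using AE_ball_contra[OF ae] B ms_sub ms_open[OF I] by blast
    qed
  qed
  have eq: "g = (\<lambda>x. \<Sum>p\<in>(\<lambda>j. (I, j)) ` idx I. cnj (a (snd p)) * cnj (Psi (fst p) (snd p) x))"
  proof
    fix x
    have "g x = cnj (\<Sum>j\<in>idx I. a j * Psi I j x)" using pw[of x] by (metis complex_cnj_cnj)
    also have "\<dots> = (\<Sum>j\<in>idx I. cnj (a j) * cnj (Psi I j x))" by simp
    also have "\<dots> = (\<Sum>p\<in>(\<lambda>j. (I, j)) ` idx I. cnj (a (snd p)) * cnj (Psi (fst p) (snd p) x))"
      by (subst sum.reindex) (auto simp: inj_on_def)
    finally show "g x = \<dots>" .
  qed
  show ?thesis by (rule inWI[OF _ _ eq]) (use idx_finite[OF I] I in \<open>auto simp: Idx_def\<close>)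
qed

end


context U begin

lemma ob_int: "is_ball B \<Longrightarrow> open B \<Longrightarrow> integrable M (\<lambda>x. indicator B x :: complex)"
  using int_ind ball_sets ob_emeas by blast

lemma step_inW: assumes I: "I \<in> nz_balls" and B: "B \<in> maxsub I"
  shows "inW (\<lambda>x. indicator B x - complex_of_real (measure M B / measure M I) * indicator I x)"
proof -
  let ?r = "complex_of_real (measure M B / measure M I)"
  let ?c = "\<lambda>B'. (if B' = B then 1 else 0) - ?r"
  have bB: "is_ball B" "open B" using B ms_sub ms_open[OF I] by auto
  have bI: "is_ball I" "open I" using I nz_balls_open[OF u I] unfolding nz_balls_def by auto
  have pI: "measure M I > 0" using ob_meas[OF bI] .
  have eq: "(\<lambda>x. indicator B x - ?r * indicator I x) = (\<lambda>x. \<Sum>B'\<in>maxsub I. ?c B' * indicator B' x)"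
  proof
    fix x
    have "(\<Sum>B'\<in>maxsub I. ?c B' * indicator B' x) =
        (\<Sum>B'\<in>maxsub I. (if B' = B then indicator B' x else 0)) - ?r * (\<Sum>B'\<in>maxsub I. indicator B' x)"
    proof -
      have "(\<Sum>B'\<in>maxsub I. ?c B' * indicator B' x) = (\<Sum>B'\<in>maxsub I. (if B' = B then indicator B' x else 0) - ?r * indicator B' x)"
        by (rule sum.cong) (auto simp: left_diff_distrib simp del: of_real_divide)
      then show ?thesis by (simp only: sum_subtractf sum_distrib_left)
    qed
    also have "(\<Sum>B'\<in>maxsub I. (if B' = B then indicator B' x else 0)) = (indicator B x :: complex)"
      using ms_finite[OF I] B by (simp add: sum.delta)
    also have "(\<Sum>B'\<in>maxsub I. indicator B' x) = (indicator I x :: complex)" using ind_sum[OF I] by simp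
    finally show "indicator B x - ?r * indicator I x = (\<Sum>B'\<in>maxsub I. ?c B' * indicator B' x)" by simp
  qed
  have "(LINT x|M. indicator B x - ?r * indicator I x) = (LINT x|M. indicator B x) - ?r * (LINT x|M. indicator I x)"
    using ob_int[OF bB] ob_int[OF bI] by (simp add: Bochner_Integration.integral_diff)
  also have "\<dots> = complex_of_real (measure M B) - ?r * complex_of_real (measure M I)" by (simp add: lint_ind)
  also have "\<dots> = 0"
  proof -
    have r: "measure M B / measure M I * measure M I = measure M B" using pI by simp
    have "?r * complex_of_real (measure M I) = complex_of_real (measure M B / measure M I * measure M I)"
      by (simp only: of_real_mult)
    then show ?thesis by (simp only: r) simp
  qed
  finally have int0: "(LINT x|M. indicator B x - ?r * indicator I x) = 0" .
  have "(\<lambda>x. indicator B x - ?r * indicator I x) \<in> V0 M I"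
    unfolding V0_def by (intro CollectI conjI exI[of _ ?c] eq int0)
  then show ?thesis using V0_inW[OF I] by blast
qed

definition cf :: "'a set \<Rightarrow> 'a set \<Rightarrow> 'a \<Rightarrow> complex" where
  "cf B K = (\<lambda>x. indicator B x - complex_of_real (measure M B / measure M K) * indicator K x)"

lemma cf_self: assumes "is_ball B" "open B" shows "inW (cf B B)"
proof -
  have "measure M B > 0" using ob_meas[OF assms] .
  then have "cf B B = (\<lambda>x. 0)" unfolding cf_def by (intro ext) simp
  then show ?thesis using inW_zero by simp
qed

lemma cf_step:
  assumes K: "K \<in> nz_balls" and K1: "K1 \<in> maxsub K" and B: "is_ball B" "open B" and h: "inW (cf B K1)"
  shows "inW (cf B K)"
proof -
  have bK1: "is_ball K1" "open K1" using K1 ms_sub ms_open[OF K] by auto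
  have p1: "measure M K1 > 0" using ob_meas[OF bK1] .
  define a where "a = complex_of_real (measure M B / measure M K1)"
  define q where "q = complex_of_real (measure M K1 / measure M K)"
  define t where "t = complex_of_real (measure M B / measure M K)"
  have s: "inW (\<lambda>x. a * (indicator K1 x - q * indicator K x))"
    unfolding a_def q_def by (intro inW_scale step_inW K K1)
  have r: "(measure M B / measure M K1) * (measure M K1 / measure M K) = measure M B / measure M K"
    using p1 by (simp add: field_simps)
  have p: "a * q = t" unfolding a_def q_def t_def by (simp only: of_real_mult[symmetric] r)
  have c1: "cf B K1 = (\<lambda>x. indicator B x - a * indicator K1 x)" unfolding cf_def a_def ..
  have c2: "cf B K = (\<lambda>x. indicator B x - t * indicator K x)" unfolding cf_def t_def ..
  have alg: "(u - a * v) + a * (v - q * w) = u - (a * q) * w" for u v w :: complex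
    by (simp add: algebra_simps)
  have eqf: "cf B K = (\<lambda>x. cf B K1 x + a * (indicator K1 x - q * indicator K x))"
    unfolding c1 c2 alg p ..
  show ?thesis unfolding eqf by (rule inW_add[OF h s])
qed

lemma cf_inW:
  assumes B: "is_ball B" "open B" and K: "is_ball K" "B \<subseteq> K"
  shows "inW (cf B K)"
proof (rule ccontr)
  assume nK: "\<not> inW (cf B K)"
  define P where "P = (\<lambda>(n::nat) K. is_ball K \<and> B \<subseteq> K \<and> \<not> inW (cf B K))"
  have st: "\<exists>K1. P (Suc n) K1 \<and> K1 \<subset> K" if PK: "P n K" for n K
  proof -
    have Kb: "is_ball K" "B \<subseteq> K" "\<not> inW (cf B K)" using PK unfolding P_def by auto
    have "K \<noteq> B" using Kb(3) cf_self[OF B] by blast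
    then have BK: "B \<subset> K" using Kb by blast
    obtain x where x: "x \<in> B" using B is_ball_ne by blast
    obtain y where y: "y \<in> K" "y \<notin> B" using BK by blast
    have Knz: "K \<in> nz_balls" using nz_balls_I[OF Kb(1), of x y] x y BK by blast
    obtain K1 where K1: "K1 \<in> maxsub K" "B \<subseteq> K1" using ms_contains[OF Knz B(1) BK] by blast
    have "\<not> inW (cf B K1)" using cf_step[OF Knz K1(1) B] Kb(3) by blast
    then have "P (Suc n) K1" unfolding P_def using K1 ms_sub by auto
    then show ?thesis using K1 ms_sub by blast
  qed
  have "\<exists>f. \<forall>n. P n (f n) \<and> f (Suc n) \<subset> f n"
  proof (rule dependent_nat_choice[where P=P and Q="\<lambda>n K K1. K1 \<subset> K"])
    show "\<exists>x. P 0 x" using nK K unfolding P_def by blast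
  next
    fix x n assume "P n x" then show "\<exists>y. P (Suc n) y \<and> y \<subset> x" by (rule st)
  qed
  then obtain f where f: "\<And>n. P n (f n)" "\<And>n. f (Suc n) \<subset> f n" by blast
  have "(\<lambda>n. diameter (f n)) \<longlonglongrightarrow> 0"
  proof -
    have dec: "\<forall>Bs :: nat \<Rightarrow> 'a set. (\<forall>n. is_ball (Bs n)) \<and> (\<forall>n. Bs (Suc n) \<subset> Bs n)
            \<longrightarrow> (\<lambda>n. diameter (Bs n)) \<longlonglongrightarrow> 0"
      using reg[unfolded regular_ultrametric_def, THEN conjunct2, THEN conjunct2, THEN conjunct1] .
    have "\<forall>n. is_ball (f n)" using f(1) unfolding P_def by simp
    then show ?thesis using dec f(2) by blast
  qed
  obtain x where x: "x \<in> B" using B is_ball_ne by blast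
  obtain e where e: "e > 0" "ball x e \<subseteq> B" using B(2) x open_contains_ball by blast
  obtain n where n: "norm (diameter (f n) - 0) < e"
    using LIMSEQ_D[OF \<open>(\<lambda>n. diameter (f n)) \<longlonglongrightarrow> 0\<close> e(1)] by blast
  have fn: "is_ball (f n)" "B \<subseteq> f n" "\<not> inW (cf B (f n))" using f(1)[of n] unfolding P_def by auto
  have "f n \<noteq> B" using fn(3) cf_self[OF B] by blast
  then obtain y where y: "y \<in> f n" "y \<notin> B" using fn(2) by blast
  then have "dist x y \<ge> e" using e(2) by (meson mem_ball not_le subsetD)
  moreover have "dist x y \<le> diameter (f n)"
    using diameter_bounded_bound[OF is_ball_bounded[OF fn(1)]] x fn(2) y by blast
  ultimately show False using n by simp
qed

end


lemma tf_zero: "(\<lambda>x. 0) \<in> test_fun"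
  by (rule tfI[of "{}"]) auto

lemma tf_diff: assumes "\<phi> \<in> test_fun" "\<psi> \<in> test_fun" shows "(\<lambda>x. \<phi> x - \<psi> x) \<in> test_fun"
proof -
  have "(\<lambda>x. \<phi> x + (\<lambda>x. (-1) * \<psi> x) x) \<in> test_fun" by (intro tf_add tf_scale assms)
  moreover have "(\<lambda>x. \<phi> x + (\<lambda>x. (-1) * \<psi> x) x) = (\<lambda>x. \<phi> x - \<psi> x)" by simp
  ultimately show ?thesis by simp
qed

context U begin

lemma tf_lint: assumes F: "finite F" "\<forall>B\<in>F. is_ball B \<and> open B"
  shows "(LINT x|M. (\<Sum>B\<in>F. c B * indicator B x)) = (\<Sum>B\<in>F. c B * complex_of_real (measure M B))"
proof -
  have "(LINT x|M. (\<Sum>B\<in>F. c B * indicator B x)) = (\<Sum>B\<in>F. LINT x|M. c B * indicator B x)"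
    by (rule Bochner_Integration.integral_sum) (use F ob_int in auto)
  also have "\<dots> = (\<Sum>B\<in>F. c B * complex_of_real (measure M B))"
    by (rule sum.cong) (simp_all add: lint_ind)
  finally show ?thesis .
qed

lemma D0_inW: assumes phi: "\<phi> \<in> test_fun" and z: "(LINT x|M. \<phi> x) = 0" shows "inW \<phi>"
proof -
  obtain F c where F: "finite F" "\<forall>B\<in>F. is_ball B \<and> open B" and phiF: "\<phi> = (\<lambda>x. \<Sum>B\<in>F. c B * indicator B x)"
    using phi unfolding test_fun_def by blast
  show ?thesis
  proof (cases "F = {}")
    case True then show ?thesis using phiF inW_zero by simp
  next
    case False
    then obtain B0 where B0: "B0 \<in> F" by blast
    obtain x0 where x0: "x0 \<in> B0" using B0 F is_ball_ne by blast
    have "bounded (\<Union>F)" using F is_ball_bounded by (intro bounded_Union) auto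
    then obtain R where R: "\<forall>y\<in>\<Union>F. dist x0 y \<le> R" using bounded_any_center by blast
    define K where "K = cball x0 (max R 1)"
    have bK1: "is_ball K" unfolding K_def is_ball_def
      by (intro exI[of _ x0] exI[of _ "max R 1"]) auto
    have bK2: "open K" unfolding K_def by (rule ultra_cball_open[OF u]) simp
    note bK = bK1 bK2
    have sub: "B \<subseteq> K" if "B \<in> F" for B using R that unfolding K_def by fastforce
    have mK: "measure M K > 0" using ob_meas[OF bK] .
    have w: "inW (\<lambda>x. \<Sum>B\<in>F. c B * cf B K x)"
      by (intro inW_sum inW_scale cf_inW F(1)) (use F sub bK in auto)
    define r where "r = (\<lambda>B. complex_of_real (measure M B / measure M K))"
    have pw: "(\<Sum>B\<in>F. c B * cf B K x) = \<phi> x" for x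
    proof -
      have "(\<Sum>B\<in>F. c B * cf B K x) = (\<Sum>B\<in>F. c B * indicator B x - (c B * r B) * indicator K x)"
        unfolding cf_def r_def by (rule sum.cong) (simp_all only: right_diff_distrib mult.assoc)
      also have "\<dots> = (\<Sum>B\<in>F. c B * indicator B x) - (\<Sum>B\<in>F. c B * r B) * indicator K x"
        by (simp only: sum_subtractf sum_distrib_right)
      also have "(\<Sum>B\<in>F. c B * r B) = (\<Sum>B\<in>F. c B * complex_of_real (measure M B)) / complex_of_real (measure M K)"
        unfolding r_def by (simp add: sum_divide_distrib)
      also have "(\<Sum>B\<in>F. c B * complex_of_real (measure M B)) = 0"
        using z tf_lint[OF F] phiF by simp
      finally show ?thesis using phiF by simp
    qed
    show ?thesis by (rule inW_eqI[OF w]) (use pw in simp)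
  qed
qed

end

locale U0 = U M Psi idx for M :: "'a::metric_space measure" and Psi idx +
  fixes I0 :: "'a set"
  assumes I0: "is_ball I0" "open I0" "measure M I0 > 0"
begin

lemma KA: assumes phi: "\<phi> \<in> test_fun"
  shows "\<exists>S a. finite S \<and> S \<subseteq> Idx
     \<and> (\<forall>p\<in>Idx. wave_term M I0 (Psi (fst p) (snd p)) \<phi> = (if p \<in> S then a p else 0))
     \<and> (\<lambda>x. \<phi> x - (LINT x|M. \<phi> x) / complex_of_real (measure M I0) * indicator I0 x)
        = (\<lambda>x. \<Sum>p\<in>S. a p * cnj (Psi (fst p) (snd p) x))"
proof -
  define k where "k = (LINT x|M. \<phi> x) / complex_of_real (measure M I0)"
  define \<psi> where "\<psi> = (\<lambda>x. \<phi> x - k * indicator I0 x)"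
  have psiT: "\<psi> \<in> test_fun" unfolding \<psi>_def by (intro tf_diff tf_scale tf_ind I0 phi)
  have "(LINT x|M. \<psi> x) = (LINT x|M. \<phi> x) - k * (LINT x|M. indicator I0 x)"
    unfolding \<psi>_def using tf_int[OF phi] ob_int[OF I0(1,2)] by (simp add: Bochner_Integration.integral_diff)
  also have "\<dots> = 0" unfolding k_def lint_ind using I0(3) by simp
  finally have "(LINT x|M. \<psi> x) = 0" .
  then have "inW \<psi>" using D0_inW[OF psiT] by blast
  then obtain S a where S: "finite S" "S \<subseteq> Idx" and psiS: "\<psi> = (\<lambda>x. \<Sum>p\<in>S. a p * cnj (Psi (fst p) (snd p) x))"
    unfolding inW_def by blast
  have wt: "wave_term M I0 (Psi (fst p) (snd p)) \<phi> = (if p \<in> S then a p else 0)" if p: "p \<in> Idx" for p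
  proof -
    obtain I j where Ij: "p = (I, j)" "I \<in> nz_balls" "j \<in> idx I" using p unfolding Idx_def by auto
    have PT: "Psi I j \<in> test_fun" using psi_tf[OF Ij(2,3)] .
    have "wave_term M I0 (Psi I j) \<phi> = (LINT x|M. Psi I j x * \<phi> x) - k * (LINT x|M. Psi I j x * indicator I0 x)"
      unfolding wave_term_def k_def by (simp add: field_simps)
    also have "\<dots> = (LINT x|M. Psi I j x * \<psi> x)"
    proof -
      have "(LINT x|M. Psi I j x * \<psi> x) = (LINT x|M. Psi I j x * \<phi> x - k * (Psi I j x * indicator I0 x))"
        unfolding \<psi>_def by (simp add: algebra_simps)
      also have "\<dots> = (LINT x|M. Psi I j x * \<phi> x) - k * (LINT x|M. Psi I j x * indicator I0 x)"
        using tf_mult_int[OF PT phi] tf_mult_int[OF PT tf_ind[OF I0(1,2)]]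
        by (simp add: Bochner_Integration.integral_diff)
      finally show ?thesis by simp
    qed
    also have "\<dots> = (LINT x|M. (\<Sum>q\<in>S. a q * (Psi I j x * cnj (Psi (fst q) (snd q) x))))"
      unfolding psiS by (simp add: sum_distrib_left mult_ac)
    also have "\<dots> = (\<Sum>q\<in>S. LINT x|M. a q * (Psi I j x * cnj (Psi (fst q) (snd q) x)))"
    proof (rule Bochner_Integration.integral_sum)
      fix q assume q: "q \<in> S"
      then have "fst q \<in> nz_balls" "snd q \<in> idx (fst q)" using S unfolding Idx_def by auto
      note qq = this
      show "integrable M (\<lambda>x. a q * (Psi I j x * cnj (Psi (fst q) (snd q) x)))"
        by (intro integrable_mult_right) (rule tf_mult_int[OF PT tf_cnj[OF psi_tf[OF qq]]])
    qed
    also have "\<dots> = (\<Sum>q\<in>S. a q * (if q = p then 1 else 0))"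
    proof (rule sum.cong)
      fix q assume q: "q \<in> S"
      then have "fst q \<in> nz_balls" "snd q \<in> idx (fst q)" using S unfolding Idx_def by auto
      then have "(LINT x|M. Psi I j x * cnj (Psi (fst q) (snd q) x)) = (if I = fst q \<and> j = snd q then 1 else 0)"
        using psi_orth[OF Ij(2,3)] by blast
      moreover have "(I = fst q \<and> j = snd q) = (q = p)" using Ij(1) by auto
      ultimately show "(LINT x|M. a q * (Psi I j x * cnj (Psi (fst q) (snd q) x))) = a q * (if q = p then 1 else 0)"
        by simp
    qed simp
    also have "\<dots> = (if p \<in> S then a p else 0)"
      using S(1) by (simp add: if_distrib sum.delta cong: if_cong)
    finally show ?thesis using Ij(1) by simp
  qed
  have fin: "(\<lambda>x. \<phi> x - (LINT x|M. \<phi> x) / complex_of_real (measure M I0) * indicator I0 x)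
        = (\<lambda>x. \<Sum>p\<in>S. a p * cnj (Psi (fst p) (snd p) x))"
    unfolding psiS[symmetric] \<psi>_def k_def ..
  show ?thesis
    by (intro exI[of _ S] exI[of _ a] conjI S ballI wt fin)
qed

end


context U0 begin

definition G :: "('a set \<Rightarrow> complex) \<Rightarrow> (('a \<Rightarrow> complex) \<Rightarrow> complex) \<Rightarrow> ('a set \<Rightarrow> nat \<Rightarrow> complex)
    \<Rightarrow> ('a \<Rightarrow> complex) \<Rightarrow> 'a set \<times> nat \<Rightarrow> complex" where
  "G lam f c \<phi> = (\<lambda>(I, j). (if lam I \<noteq> 0 then f (\<lambda>x. cnj (Psi I j x)) / lam I else c I j)
                 * wave_term M I0 (Psi I j) \<phi>)"

definition coef where "coef lam f c p = (if lam (fst p) \<noteq> 0 then f (\<lambda>x. cnj (Psi (fst p) (snd p) x)) / lam (fst p) else c (fst p) (snd p))"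

lemma G_app: "G lam f c \<phi> p = coef lam f c p * wave_term M I0 (Psi (fst p) (snd p)) \<phi>"
  unfolding G_def coef_def by (cases p) simp

lemma sf_iff: "solution_formula M lam Psi idx f I0 u0 c u \<longleftrightarrow>
   (\<forall>\<phi>\<in>test_fun. (G lam f c \<phi> has_sum (u \<phi> - u0 * (LINT x|M. \<phi> x))) Idx)"
  unfolding solution_formula_def G_def Idx_def ..

lemma Idx_D: "p \<in> Idx \<Longrightarrow> fst p \<in> nz_balls \<and> snd p \<in> idx (fst p)"
  unfolding Idx_def by auto

lemma wt_add: fixes \<Psi> \<phi> \<psi> :: "'a \<Rightarrow> complex" assumes "\<Psi> \<in> test_fun" "\<phi> \<in> test_fun" "\<psi> \<in> test_fun"
  shows "wave_term M I0 \<Psi> (\<lambda>x. \<phi> x + \<psi> x) = wave_term M I0 \<Psi> \<phi> + wave_term M I0 \<Psi> \<psi>"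
proof -
  have a: "(LINT x|M. \<Psi> x * (\<phi> x + \<psi> x)) = (LINT x|M. \<Psi> x * \<phi> x) + (LINT x|M. \<Psi> x * \<psi> x)"
    using tf_mult_int[OF assms(1,2)] tf_mult_int[OF assms(1,3)] by (simp add: distrib_left)
  have b: "(LINT x|M. \<phi> x + \<psi> x) = (LINT x|M. \<phi> x) + (LINT x|M. \<psi> x)"
    using tf_int[OF assms(2)] tf_int[OF assms(3)] by simp
  show ?thesis unfolding wave_term_def a b by (simp add: algebra_simps add_divide_distrib)
qed

lemma wt_scale: fixes \<Psi> \<phi> :: "'a \<Rightarrow> complex" shows "wave_term M I0 \<Psi> (\<lambda>x. a * \<phi> x) = a * wave_term M I0 \<Psi> \<phi>"
proof -
  have "(LINT x|M. \<Psi> x * (a * \<phi> x)) = (LINT x|M. a * (\<Psi> x * \<phi> x))" by (simp add: mult_ac)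
  also have "\<dots> = a * (LINT x|M. \<Psi> x * \<phi> x)" by simp
  finally show ?thesis unfolding wave_term_def by (simp add: algebra_simps)
qed

lemma wt_psi: assumes "p \<in> Idx" "q \<in> Idx"
  shows "wave_term M I0 (Psi (fst p) (snd p)) (\<lambda>x. cnj (Psi (fst q) (snd q) x)) = (if p = q then 1 else 0)"
proof -
  have p: "fst p \<in> nz_balls" "snd p \<in> idx (fst p)" and q: "fst q \<in> nz_balls" "snd q \<in> idx (fst q)"
    using Idx_D assms by auto
  have "(LINT x|M. Psi (fst q) (snd q) x) = 0" using psi_form[OF q] by blast
  then have z: "(LINT x|M. cnj (Psi (fst q) (snd q) x)) = 0" by simp
  have o: "(LINT x|M. Psi (fst p) (snd p) x * cnj (Psi (fst q) (snd q) x)) = (if p = q then 1 else 0)"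
    using psi_orth[OF p q] by (simp add: prod_eq_iff)
  show ?thesis unfolding wave_term_def z o by simp
qed

lemma wt_I0: fixes \<Psi> :: "'a \<Rightarrow> complex" shows "wave_term M I0 \<Psi> (indicator I0) = 0"
  unfolding wave_term_def lint_ind using I0(3) by simp

lemma tf_I0: "indicator I0 \<in> test_fun" using tf_ind[OF I0(1,2)] .

lemma sf_cs:
  assumes H: "\<forall>I\<in>nz_balls. lam I = 0 \<longrightarrow> (\<forall>j\<in>idx I. f (\<lambda>x. cnj (Psi I j x)) = 0)"
    and sf: "solution_formula M lam Psi idx f I0 u0 c u"
  shows "cauchy_solution M lam Psi idx f I0 u0 u"
proof -
  have hs: "(G lam f c \<phi> has_sum (u \<phi> - u0 * (LINT x|M. \<phi> x))) Idx" if "\<phi> \<in> test_fun" for \<phi> :: "'a \<Rightarrow> complex"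
    using sf that unfolding sf_iff by blast
  have lin: "lin_fun test_fun u"
    unfolding lin_fun_def
  proof (intro conjI ballI allI)
    fix \<phi> \<psi> :: "'a \<Rightarrow> complex" assume a: "\<phi> \<in> test_fun" "\<psi> \<in> test_fun"
    have s: "(G lam f c (\<lambda>x. \<phi> x + \<psi> x) has_sum ((u \<phi> - u0 * (LINT x|M. \<phi> x)) + (u \<psi> - u0 * (LINT x|M. \<psi> x)))) Idx"
    proof -
      have "((\<lambda>p. G lam f c \<phi> p + G lam f c \<psi> p) has_sum ((u \<phi> - u0 * (LINT x|M. \<phi> x)) + (u \<psi> - u0 * (LINT x|M. \<psi> x)))) Idx"
        by (rule has_sum_add[OF hs[OF a(1)] hs[OF a(2)]])
      moreover have "G lam f c \<phi> p + G lam f c \<psi> p = G lam f c (\<lambda>x. \<phi> x + \<psi> x) p" if "p \<in> Idx" for p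
        unfolding G_app using wt_add[OF psi_tf a] Idx_D[OF that] by (simp add: algebra_simps)
      ultimately show ?thesis using has_sum_cong[of Idx "\<lambda>p. G lam f c \<phi> p + G lam f c \<psi> p" "G lam f c (\<lambda>x. \<phi> x + \<psi> x)"] by blast
    qed
    have "u (\<lambda>x. \<phi> x + \<psi> x) - u0 * (LINT x|M. \<phi> x + \<psi> x) = (u \<phi> - u0 * (LINT x|M. \<phi> x)) + (u \<psi> - u0 * (LINT x|M. \<psi> x))"
      using has_sum_unique[OF hs[OF tf_add[OF a]] s] .
    moreover have "(LINT x|M. \<phi> x + \<psi> x) = (LINT x|M. \<phi> x) + (LINT x|M. \<psi> x)"
      using tf_int[OF a(1)] tf_int[OF a(2)] by simp
    ultimately show "u (\<lambda>x. \<phi> x + \<psi> x) = u \<phi> + u \<psi>" by (simp add: algebra_simps)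
  next
    fix \<phi> :: "'a \<Rightarrow> complex" and a :: complex assume ph: "\<phi> \<in> test_fun"
    have s: "(G lam f c (\<lambda>x. a * \<phi> x) has_sum (a * (u \<phi> - u0 * (LINT x|M. \<phi> x)))) Idx"
    proof -
      have "((\<lambda>p. a * G lam f c \<phi> p) has_sum (a * (u \<phi> - u0 * (LINT x|M. \<phi> x)))) Idx"
        by (rule has_sum_cmult_right[OF hs[OF ph]])
      moreover have "a * G lam f c \<phi> p = G lam f c (\<lambda>x. a * \<phi> x) p" for p
        unfolding G_app wt_scale by (simp add: algebra_simps)
      ultimately show ?thesis by simp
    qed
    have "u (\<lambda>x. a * \<phi> x) - u0 * (LINT x|M. a * \<phi> x) = a * (u \<phi> - u0 * (LINT x|M. \<phi> x))"
      using has_sum_unique[OF hs[OF tf_scale[OF ph]] s] .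
    then show "u (\<lambda>x. a * \<phi> x) = a * u \<phi>" by (simp add: algebra_simps)
  qed
  have pdo: "pdo_eq lam Psi idx u f"
    unfolding pdo_eq_def
  proof (intro ballI)
    fix I j assume I: "I \<in> nz_balls" and j: "j \<in> idx I"
    let ?p = "(I, j)"
    have pI: "?p \<in> Idx" using I j unfolding Idx_def by simp
    have ct: "(\<lambda>x. cnj (Psi I j x)) \<in> test_fun" using tf_cnj[OF psi_tf[OF I j]] .
    have "(G lam f c (\<lambda>x. cnj (Psi I j x)) has_sum coef lam f c ?p) Idx"
    proof -
      have "(G lam f c (\<lambda>x. cnj (Psi I j x)) has_sum coef lam f c ?p) {?p}"
        by (rule has_sum_finiteI) (simp_all add: G_app wt_psi[OF pI pI, simplified])
      moreover have "G lam f c (\<lambda>x. cnj (Psi I j x)) q = 0" if "q \<in> Idx - {?p}" for q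
        using wt_psi[OF _ pI, of q] that unfolding G_app by auto
      ultimately show ?thesis using pI by (subst has_sum_cong_neutral[where T="{?p}"]) auto
    qed
    then have "u (\<lambda>x. cnj (Psi I j x)) - u0 * (LINT x|M. cnj (Psi I j x)) = coef lam f c ?p"
      using has_sum_unique hs[OF ct] by blast
    moreover have "(LINT x|M. cnj (Psi I j x)) = 0" using psi_form[OF I j] by simp
    ultimately have uv: "u (\<lambda>x. cnj (Psi I j x)) = coef lam f c ?p" by simp
    show "lam I * u (\<lambda>x. cnj (Psi I j x)) = f (\<lambda>x. cnj (Psi I j x))"
    proof (cases "lam I = 0")
      case True then show ?thesis using H I j by simp
    next
      case False then show ?thesis using uv unfolding coef_def by simp
    qed
  qed
  have "(G lam f c (indicator I0) has_sum 0) Idx"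
    by (rule has_sum_0) (simp add: G_app wt_I0)
  then have "u (indicator I0) - u0 * (LINT x|M. indicator I0 x) = 0"
    using has_sum_unique hs[OF tf_I0] by blast
  then have "u (indicator I0) = u0 * complex_of_real (measure M I0)" by (simp add: lint_ind)
  then show ?thesis unfolding cauchy_solution_def using lin pdo by blast
qed

lemma tf_sum: assumes "finite S" "\<forall>p\<in>S. h p \<in> test_fun" shows "(\<lambda>x. \<Sum>p\<in>S. a p * h p x) \<in> test_fun"
  using assms
proof (induction S rule: finite_induct)
  case empty then show ?case using tf_zero by simp
next
  case (insert q S)
  have "(\<lambda>x. (\<lambda>x. a q * h q x) x + (\<lambda>x. \<Sum>p\<in>S. a p * h p x) x) \<in> test_fun"
    using insert by (intro tf_add tf_scale) auto
  then show ?case using insert by simp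
qed

lemma lin_add: "lin_fun test_fun u \<Longrightarrow> \<phi> \<in> test_fun \<Longrightarrow> \<psi> \<in> test_fun \<Longrightarrow> u (\<lambda>x. \<phi> x + \<psi> x) = u \<phi> + u \<psi>"
  unfolding lin_fun_def by blast

lemma lin_scale: "lin_fun test_fun u \<Longrightarrow> \<phi> \<in> test_fun \<Longrightarrow> u (\<lambda>x. a * \<phi> x) = a * u \<phi>"
  unfolding lin_fun_def by blast

lemma lin_sum: assumes lin: "lin_fun test_fun u" and S: "finite S" and h: "\<And>p. p \<in> S \<Longrightarrow> h p \<in> test_fun"
  shows "u (\<lambda>x. \<Sum>p\<in>S. a p * h p x) = (\<Sum>p\<in>S. a p * u (h p))"
  using S h
proof (induction S rule: finite_induct)
  case empty
  have "u (\<lambda>x. 0 * (\<lambda>x. 0) x) = 0 * u (\<lambda>x. 0)" by (rule lin_scale[OF lin tf_zero])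
  then show ?case by simp
next
  case (insert p S)
  have t1: "(\<lambda>x. a p * h p x) \<in> test_fun" using insert by (intro tf_scale) auto
  have t2: "(\<lambda>x. \<Sum>p\<in>S. a p * h p x) \<in> test_fun" using tf_sum insert by auto
  have "u (\<lambda>x. \<Sum>p\<in>insert p S. a p * h p x) = u (\<lambda>x. (\<lambda>x. a p * h p x) x + (\<lambda>x. \<Sum>p\<in>S. a p * h p x) x)"
    using insert by simp
  also have "\<dots> = u (\<lambda>x. a p * h p x) + u (\<lambda>x. \<Sum>p\<in>S. a p * h p x)"
    by (rule lin_add[OF lin t1 t2])
  also have "u (\<lambda>x. a p * h p x) = a p * u (h p)" using lin_scale[OF lin insert(4)[of p]] by simp
  finally show ?case using insert by simp
qed

lemma cs_sf:
  assumes cs: "cauchy_solution M lam Psi idx f I0 u0 u"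
  shows "solution_formula M lam Psi idx f I0 u0 (\<lambda>I j. u (\<lambda>x. cnj (Psi I j x))) u"
  unfolding sf_iff
proof
  fix \<phi> :: "'a \<Rightarrow> complex" assume ph: "\<phi> \<in> test_fun"
  have lin: "lin_fun test_fun u" and pdo: "pdo_eq lam Psi idx u f"
    and u0: "u (indicator I0) = u0 * complex_of_real (measure M I0)"
    using cs unfolding cauchy_solution_def by auto
  let ?c = "\<lambda>I j. u (\<lambda>x. cnj (Psi I j x))"
  obtain S a where S: "finite S" "S \<subseteq> Idx"
    and wt: "\<forall>p\<in>Idx. wave_term M I0 (Psi (fst p) (snd p)) \<phi> = (if p \<in> S then a p else 0)"
    and dec: "(\<lambda>x. \<phi> x - (LINT x|M. \<phi> x) / complex_of_real (measure M I0) * indicator I0 x)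
        = (\<lambda>x. \<Sum>p\<in>S. a p * cnj (Psi (fst p) (snd p) x))"
    using KA[OF ph] by blast
  have cf: "coef lam f ?c p = ?c (fst p) (snd p)" if "p \<in> Idx" for p
  proof (cases "lam (fst p) = 0")
    case False
    have "lam (fst p) * ?c (fst p) (snd p) = f (\<lambda>x. cnj (Psi (fst p) (snd p) x))"
      using pdo Idx_D[OF that] unfolding pdo_eq_def by blast
    then show ?thesis using False unfolding coef_def by (simp add: field_simps)
  qed (simp add: coef_def)
  define k where "k = (LINT x|M. \<phi> x) / complex_of_real (measure M I0)"
  have phi_eq: "\<phi> = (\<lambda>x. (\<lambda>x. \<Sum>p\<in>S. a p * cnj (Psi (fst p) (snd p) x)) x + (\<lambda>x. k * indicator I0 x) x)"
  proof
    fix x show "\<phi> x = (\<lambda>x. \<Sum>p\<in>S. a p * cnj (Psi (fst p) (snd p) x)) x + (\<lambda>x. k * indicator I0 x) x"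
      using fun_cong[OF dec, of x] unfolding k_def by (simp add: algebra_simps)
  qed
  have htf: "(\<lambda>x. cnj (Psi (fst p) (snd p) x)) \<in> test_fun" if "p \<in> S" for p
    using Idx_D S(2) that tf_cnj psi_tf by blast
  have t2: "(\<lambda>x. k * indicator I0 x) \<in> test_fun" using tf_scale[OF tf_I0] .
  have "(\<lambda>x. \<phi> x - k * indicator I0 x) \<in> test_fun" using tf_diff[OF ph t2] by simp
  then have t1: "(\<lambda>x. \<Sum>p\<in>S. a p * cnj (Psi (fst p) (snd p) x)) \<in> test_fun"
    by (simp only: dec[folded k_def])
  have "u \<phi> = u (\<lambda>x. \<Sum>p\<in>S. a p * cnj (Psi (fst p) (snd p) x)) + u (\<lambda>x. k * indicator I0 x)"
    by (subst phi_eq) (rule lin_add[OF lin t1 t2])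
  also have "u (\<lambda>x. \<Sum>p\<in>S. a p * cnj (Psi (fst p) (snd p) x)) = (\<Sum>p\<in>S. a p * ?c (fst p) (snd p))"
    using lin_sum[OF lin S(1), of "\<lambda>p x. cnj (Psi (fst p) (snd p) x)" a] htf by simp
  also have "u (\<lambda>x. k * indicator I0 x) = k * u (indicator I0)"
    using lin_scale[OF lin tf_I0] by simp
  also have "k * u (indicator I0) = u0 * (LINT x|M. \<phi> x)"
    unfolding u0 k_def using I0(3) by simp
  finally have ueq: "u \<phi> - u0 * (LINT x|M. \<phi> x) = (\<Sum>p\<in>S. a p * ?c (fst p) (snd p))" by simp
  have "(G lam f ?c \<phi> has_sum (\<Sum>p\<in>S. a p * ?c (fst p) (snd p))) S"
  proof (rule has_sum_finiteI[OF S(1)], rule sum.cong)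
    fix p assume pS: "p \<in> S"
    then have pI: "p \<in> Idx" using S(2) by blast
    have "wave_term M I0 (Psi (fst p) (snd p)) \<phi> = a p" using wt pI pS by simp
    then show "a p * ?c (fst p) (snd p) = G lam f ?c \<phi> p" unfolding G_app cf[OF pI] by simp
  qed simp
  moreover have "G lam f ?c \<phi> p = 0" if "p \<in> Idx - S" for p
    using that wt unfolding G_app by auto
  ultimately have "(G lam f ?c \<phi> has_sum (\<Sum>p\<in>S. a p * ?c (fst p) (snd p))) Idx"
    using S(2) by (subst has_sum_cong_neutral[where T=S]) auto
  then show "(G lam f ?c \<phi> has_sum (u \<phi> - u0 * (LINT x|M. \<phi> x))) Idx" using ueq by simp
qed

lemma exists_sf: "\<exists>u. solution_formula M lam Psi idx f I0 u0 (\<lambda>I j. 0) u"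
proof -
  define u where "u = (\<lambda>\<phi>. u0 * (LINT x|M. \<phi> x) + infsum (G lam f (\<lambda>I j. 0) \<phi>) Idx)"
  have "(G lam f (\<lambda>I j. 0) \<phi> has_sum (u \<phi> - u0 * (LINT x|M. \<phi> x))) Idx" if ph: "\<phi> \<in> test_fun" for \<phi> :: "'a \<Rightarrow> complex"
  proof -
    obtain S a where S: "finite S" "S \<subseteq> Idx"
      and wt: "\<forall>p\<in>Idx. wave_term M I0 (Psi (fst p) (snd p)) \<phi> = (if p \<in> S then a p else 0)"
      using KA[OF ph] by blast
    have "(G lam f (\<lambda>I j. 0) \<phi> has_sum (sum (G lam f (\<lambda>I j. 0) \<phi>) S)) S"
      by (rule has_sum_finiteI[OF S(1)]) simp
    moreover have "G lam f (\<lambda>I j. 0) \<phi> p = 0" if "p \<in> Idx - S" for p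
      using that wt unfolding G_app by auto
    ultimately have "(G lam f (\<lambda>I j. 0) \<phi> has_sum (sum (G lam f (\<lambda>I j. 0) \<phi>) S)) Idx"
      using S(2) by (subst has_sum_cong_neutral[where T=S]) auto
    then have "G lam f (\<lambda>I j. 0) \<phi> summable_on Idx" unfolding summable_on_def by blast
    then show ?thesis unfolding u_def by simp
  qed
  then show ?thesis unfolding sf_iff by blast
qed

end

theorem mainTheorem3:
  fixes M :: "'a::metric_space measure"
    and Psi :: "'a set \<Rightarrow> nat \<Rightarrow> 'a \<Rightarrow> complex"
    and idx :: "'a set \<Rightarrow> nat set"
    and Tk lam :: "'a set \<Rightarrow> complex"
    and f :: "('a \<Rightarrow> complex) \<Rightarrow> complex"
    and I0 :: "'a set"
    and u0 :: complex
  assumes "regular_ultrametric TYPE('a)"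
    and "ball_measure M"
    and "wavelet_basis M Psi idx"
    and "ultrametric_pdo M Tk lam Psi idx"
    and "lin_fun (test_fun0 M) f"
    and "is_ball I0" and "open I0" and "measure M I0 > 0"
    and "\<forall>I\<in>nz_balls. lam I = 0 \<longrightarrow> (\<forall>j\<in>idx I. f (\<lambda>x. cnj (Psi I j x)) = 0)"
  shows "(\<exists>u. cauchy_solution M lam Psi idx f I0 u0 u)
       \<and> (\<forall>u. cauchy_solution M lam Psi idx f I0 u0 u
              \<longleftrightarrow> (\<exists>c. solution_formula M lam Psi idx f I0 u0 c u))"
proof -
  interpret U0 M Psi idx I0
    by unfold_locales (use assms in auto)
  have H: "\<forall>I\<in>nz_balls. lam I = 0 \<longrightarrow> (\<forall>j\<in>idx I. f (\<lambda>x. cnj (Psi I j x)) = 0)" using assms(9) .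
  obtain u where u: "solution_formula M lam Psi idx f I0 u0 (\<lambda>I j. 0) u" using exists_sf by blast
  have ex: "\<exists>u. cauchy_solution M lam Psi idx f I0 u0 u" using sf_cs[OF H u] by blast
  have eq: "cauchy_solution M lam Psi idx f I0 u0 u \<longleftrightarrow> (\<exists>c. solution_formula M lam Psi idx f I0 u0 c u)" for u
  proof
    assume "cauchy_solution M lam Psi idx f I0 u0 u"
    then show "\<exists>c. solution_formula M lam Psi idx f I0 u0 c u" using cs_sf by blast
  next
    assume "\<exists>c. solution_formula M lam Psi idx f I0 u0 c u"
    then obtain c where "solution_formula M lam Psi idx f I0 u0 c u" by blast
    then show "cauchy_solution M lam Psi idx f I0 u0 u" using sf_cs[OF H] by blast
  qed
  show ?thesis using ex eq by blast
qed

end
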